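(* Let $s\ge 2$ and $t\ge 0$ be integers, and let $S=\{1+j(2t+4),\ 2t+3+j(2t+4) : 0\le j\le 2^{s-2}-1\}$, i.e. $S=\{1,\,2t+3,\,2t+5,\,4t+7,\dots,\,1+(2^{s-2}-1)(2t+4),\,2t+3+(2^{s-2}-1)(2t+4)\}$. Then $\chi_{la}(C_{2^s(t+2)}(S))=3$, where $C_{2^s(t+2)}(S)$ is the circulant graph with connection set $S$.
   Context: For an integer $n\ge 3$ and a set $S$ of integers, the circulant graph $C_n(S)$ has vertex set $\mathbb Z_n$, with distinct $u,v$ adjacent iff $u-v\equiv \pm a\pmod n$ for some $a\in S$. For a connected graph $G=(V,E)$ with $q=|E|$, a local antimagic labeling is a bijection $f:E\to\{1,\dots,q\}$ such that adjacent vertices $x,y$ satisfy $f^+(x)\ne f^+(y)$, where $f^+(x)=\sum f(e)$ over edges $e$ incident to $x$; $\chi_{la}(G)$ is the minimum number of distinct values of $f^+$ over all local antimagic labelings of $G$. *)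

theory Defs
  imports Main
begin

definition circ_vertices :: "nat \<Rightarrow> int set" where
  "circ_vertices n = {0..<int n}"

definition circ_edges :: "nat \<Rightarrow> int set \<Rightarrow> int set set" where
  "circ_edges n S = {{u, v} | u v. u \<in> circ_vertices n \<and> v \<in> circ_vertices n \<and> u \<noteq> v \<and>
      (\<exists>a\<in>S. (u - v) mod int n = a mod int n \<or> (u - v) mod int n = (- a) mod int n)}"

definition vsum :: "'a set set \<Rightarrow> ('a set \<Rightarrow> nat) \<Rightarrow> 'a \<Rightarrow> nat" where
  "vsum E f x = (\<Sum>e\<in>{e\<in>E. x \<in> e}. f e)"

definition local_antimagic :: "'a set \<Rightarrow> 'a set set \<Rightarrow> ('a set \<Rightarrow> nat) \<Rightarrow> bool" where
  "local_antimagic V E f \<longleftrightarrow> bij_betw f E {1..card E} \<and>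
     (\<forall>x\<in>V. \<forall>y\<in>V. {x, y} \<in> E \<longrightarrow> x \<noteq> y \<longrightarrow> vsum E f x \<noteq> vsum E f y)"

definition chi_la :: "'a set \<Rightarrow> 'a set set \<Rightarrow> nat" where
  "chi_la V E = (LEAST k. \<exists>f. local_antimagic V E f \<and> card (vsum E f ` V) = k)"

end

theory Submission
  imports Defs
begin


definition phi :: "nat \<Rightarrow> nat \<times> nat \<times> nat \<Rightarrow> int set" where
 "phi m = (\<lambda>(r,i,k). {int r + int m * int i, (int r + 1) mod int m + int m * int k})"

definition DD :: "nat \<Rightarrow> nat \<Rightarrow> (nat \<times> nat \<times> nat) set" where
 "DD m N = {0..<m} \<times> {0..<N} \<times> {0..<N}"

definition beta :: "nat \<Rightarrow> nat \<Rightarrow> nat" where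
 "beta m r = (if even r then r div 2 else m - 1 - r div 2)"

definition lab :: "nat \<Rightarrow> nat \<Rightarrow> nat \<times> nat \<times> nat \<Rightarrow> nat" where
 "lab m N = (\<lambda>(r,i,k). beta m r * N^2 + 1 + (if even r then N*i + k else N^2 - 1 - (N*k + i)))"

lemma phi_inj:
  assumes "m \<ge> 3"
  shows "inj_on (phi m) (DD m N)"
proof (rule inj_onI)
  fix x y assume x: "x \<in> DD m N" and y: "y \<in> DD m N" and e: "phi m x = phi m y"
  obtain r i k where xd: "x = (r,i,k)" by (cases x) auto
  obtain r' i' k' where yd: "y = (r',i',k')" by (cases y) auto
  have rm: "r < m" "r' < m" using x y xd yd by (auto simp: DD_def)
  define a where "a = int r + int m * int i"
  define b where "b = (int r + 1) mod int m + int m * int k"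
  define a' where "a' = int r' + int m * int i'"
  define b' where "b' = (int r' + 1) mod int m + int m * int k'"
  have am: "a mod int m = int r" "a div int m = int i" using rm unfolding a_def by auto
  have am': "a' mod int m = int r'" "a' div int m = int i'" using rm unfolding a'_def by auto
  have bm: "b mod int m = (int r + 1) mod int m" "b div int m = int k" using assms unfolding b_def by auto
  have bm': "b' mod int m = (int r' + 1) mod int m" "b' div int m = int k'" using assms unfolding b'_def by auto
  have "{a,b} = {a',b'}" using e xd yd unfolding phi_def a_def b_def a'_def b'_def by simp
  then have "(a = a' \<and> b = b') \<or> (a = b' \<and> b = a')" by (auto simp: doubleton_eq_iff)
  then show "x = y"
  proof
    assume h: "a = a' \<and> b = b'"
    then have "int r = int r'" "int i = int i'" "int k = int k'" using am am' bm bm' by metis+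
    then show ?thesis using xd yd by simp
  next
    assume h: "a = b' \<and> b = a'"
    then have h1: "int r = (int r' + 1) mod int m" and h2: "int r' = (int r + 1) mod int m"
      using am am' bm bm' by metis+
    show ?thesis
    proof (cases "r' + 1 < m")
      case True
      then have "int r = int r' + 1" using h1 by simp
      show ?thesis
      proof (cases "r + 1 < m")
        case True
        then have "int r' = int r + 1" using h2 by simp
        then show ?thesis using \<open>int r = int r' + 1\<close> by simp
      next
        case False
        then have "r + 1 = m" using rm by simp
        then have "int r + 1 = int m" by simp
        then have "int r' = 0" using h2 by simp
        then show ?thesis using \<open>int r = int r' + 1\<close> \<open>r + 1 = m\<close> assms by simp
      qed
    next
      case False
      then have "r' + 1 = m" using rm by simp
      then have "int r' + 1 = int m" by simp
      then have "r = 0" using h1 by simp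
      then show ?thesis using h2 assms \<open>r' + 1 = m\<close> by simp
    qed
  qed
qed



lemma beta_lt: "even m \<Longrightarrow> r < m \<Longrightarrow> beta m r < m"
  unfolding beta_def by auto

lemma beta_inj: assumes "even m" "r < m" "r' < m" "beta m r = beta m r'" shows "r = r'"
proof -
  have A: "even r \<Longrightarrow> r div 2 < m div 2" using assms by (auto elim!: evenE)
  have B: "odd r' \<Longrightarrow> m - 1 - r' div 2 \<ge> m div 2" using assms by (auto elim!: evenE oddE)
  have A': "even r' \<Longrightarrow> r' div 2 < m div 2" using assms by (auto elim!: evenE)
  have B': "odd r \<Longrightarrow> m - 1 - r div 2 \<ge> m div 2" using assms by (auto elim!: evenE oddE)
  show ?thesis using assms(4) A B A' B' assms(2,3) unfolding beta_def
    by (auto split: if_splits elim!: evenE oddE)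
qed

lemma sq_bound: "i < (N::nat) \<Longrightarrow> k < N \<Longrightarrow> N*i + k < N^2"
proof -
  assume "i < N" "k < N"
  then have "N*i + k < N*i + N" by simp
  also have "\<dots> = N * (i+1)" by simp
  also have "\<dots> \<le> N * N" using \<open>i<N\<close> by (intro mult_le_mono2) simp
  finally show ?thesis by (simp add: power2_eq_square)
qed

lemma sq_inj: "i < (N::nat) \<Longrightarrow> k < N \<Longrightarrow> i' < N \<Longrightarrow> k' < N \<Longrightarrow> N*i + k = N*i' + k' \<Longrightarrow> i = i' \<and> k = k'"
proof -
  assume a: "i < N" "k < N" "i' < N" "k' < N" "N*i + k = N*i' + k'"
  have N: "N > 0" using a by simp
  have "(N*i + k) div N = i" "(N*i + k) mod N = k" using a(1-4) N by simp_all
  moreover have "(N*i' + k') div N = i'" "(N*i' + k') mod N = k'" using a(1-4) N by simp_all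
  ultimately show ?thesis using a(5) by (metis (no_types, lifting))
qed

definition MM :: "nat \<Rightarrow> nat \<times> nat \<times> nat \<Rightarrow> nat" where
  "MM N = (\<lambda>(r,i,k). if even r then N*i + k else N^2 - 1 - (N*k + i))"

lemma lab_MM: "lab m N x = beta m (fst x) * N^2 + 1 + MM N x"
  by (cases x) (auto simp: lab_def MM_def)

lemma MM_lt: "x \<in> DD m N \<Longrightarrow> MM N x < N^2"
  using sq_bound by (cases x) (fastforce simp: MM_def DD_def)

lemma MM_inj: "x \<in> DD m N \<Longrightarrow> y \<in> DD m N \<Longrightarrow> fst x = fst y \<Longrightarrow> MM N x = MM N y \<Longrightarrow> x = y"
proof -
  assume x: "x \<in> DD m N" and y: "y \<in> DD m N" and f: "fst x = fst y" and e: "MM N x = MM N y"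
  obtain r i k where xd: "x = (r,i,k)" by (cases x) auto
  obtain r' i' k' where yd: "y = (r',i',k')" by (cases y) auto
  have b: "i < N" "k < N" "i' < N" "k' < N" "r = r'" using x y xd yd f by (auto simp: DD_def)
  show ?thesis
  proof (cases "even r")
    case True
    then have "N*i + k = N*i' + k'" using e xd yd b by (simp add: MM_def)
    then show ?thesis using sq_inj b xd yd by blast
  next
    case False
    then have "N^2 - 1 - (N*k + i) = N^2 - 1 - (N*k' + i')" using e xd yd b by (simp add: MM_def)
    moreover have "N*k + i < N^2" "N*k' + i' < N^2" using sq_bound b by auto
    ultimately have "N*k + i = N*k' + i'" by linarith
    then show ?thesis using sq_inj b xd yd by blast
  qed
qed

lemma card_DD: "card (DD m N) = m * N^2"
  by (simp add: DD_def card_cartesian_product power2_eq_square)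

lemma lab_bij:
  assumes "even m"
  shows "bij_betw (lab m N) (DD m N) {1..m * N^2}"
proof -
  have inj: "inj_on (lab m N) (DD m N)"
  proof (rule inj_onI)
    fix x y assume x: "x \<in> DD m N" and y: "y \<in> DD m N" and e: "lab m N x = lab m N y"
    let ?b = "beta m (fst x)" and ?b' = "beta m (fst y)"
    have "N \<noteq> 0" using MM_lt[OF x] by (cases "N = 0") auto
    then have N2: "N^2 \<noteq> 0" by simp
    have "(?b * N^2 + MM N x) div N^2 = ?b" "(?b * N^2 + MM N x) mod N^2 = MM N x"
      using MM_lt[OF x] N2 by simp_all
    moreover have "(?b' * N^2 + MM N y) div N^2 = ?b'" "(?b' * N^2 + MM N y) mod N^2 = MM N y"
      using MM_lt[OF y] N2 by simp_all
    moreover have "?b * N^2 + MM N x = ?b' * N^2 + MM N y" using e by (simp add: lab_MM)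
    ultimately have "?b = ?b'" "MM N x = MM N y" by metis+
    moreover have "fst x < m" "fst y < m" using x y by (auto simp: DD_def)
    ultimately have "fst x = fst y" using beta_inj assms by blast
    then show "x = y" using MM_inj x y \<open>MM N x = MM N y\<close> by blast
  qed
  have img: "lab m N ` DD m N \<subseteq> {1..m * N^2}"
  proof
    fix y assume "y \<in> lab m N ` DD m N"
    then obtain x where x: "x \<in> DD m N" and y: "y = lab m N x" by auto
    have "fst x < m" using x by (auto simp: DD_def)
    then have "beta m (fst x) + 1 \<le> m" using beta_lt assms by (simp add: Suc_le_eq)
    then have "(beta m (fst x) + 1) * N^2 \<le> m * N^2" by (rule mult_le_mono1)
    moreover have "MM N x + 1 \<le> N^2" using MM_lt[OF x] by simp
    ultimately have "beta m (fst x) * N^2 + 1 + MM N x \<le> m * N^2" by (simp add: algebra_simps)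
    then show "y \<in> {1..m * N^2}" using y by (simp add: lab_MM)
  qed
  have "finite (DD m N)" by (simp add: DD_def)
  then have "card (lab m N ` DD m N) = m * N^2" using inj card_DD by (simp add: card_image)
  then have "lab m N ` DD m N = {1..m * N^2}" using img by (intro card_subset_eq) auto
  then show ?thesis using inj by (simp add: bij_betw_def)
qed



lemma S_mod:
  fixes t :: nat
  assumes "a \<in> {1 + int j * (2 * int t + 4) | j. j \<le> K - 1} \<union> {2 * int t + 3 + int j * (2 * int t + 4) | j. j \<le> K - 1}"
  shows "a mod (2 * int t + 4) = 1 \<or> a mod (2 * int t + 4) = 2 * int t + 3"
  using assms
proof
  assume "a \<in> {1 + int j * (2 * int t + 4) | j. j \<le> K - 1}"
  then obtain j where "a = 1 + int j * (2 * int t + 4)" by auto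
  then show ?thesis by simp
next
  assume "a \<in> {2 * int t + 3 + int j * (2 * int t + 4) | j. j \<le> K - 1}"
  then obtain j where "a = 2 * int t + 3 + int j * (2 * int t + 4)" by auto
  then show ?thesis by simp
qed

lemma divlt: "(M::int) > 0 \<Longrightarrow> v < N * M \<Longrightarrow> v div M < N"
  by (smt (verit) minus_div_mult_eq_mod mult_right_less_imp_less pos_mod_sign)

lemma to_phi:
  fixes u v :: int
  assumes "m \<ge> 2" "0 \<le> u" "u < int N * int m" "0 \<le> v" "v < int N * int m" "(u - v) mod int m = 1"
  shows "{u, v} \<in> phi m ` DD m N"
proof -
  have M: "int m > 0" using assms by simp
  define r where "r = nat (v mod int m)"
  define i where "i = nat (v div int m)"
  define k where "k = nat (u div int m)"
  have ri: "int r = v mod int m" unfolding r_def using M by simp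
  have ii: "int i = v div int m" unfolding i_def using M assms by (simp add: pos_imp_zdiv_nonneg_iff)
  have ki: "int k = u div int m" unfolding k_def using M assms by (simp add: pos_imp_zdiv_nonneg_iff)
  have "int r < int m" using ri M by simp
  then have "r < m" by simp
  moreover have "int i < int N" using ii divlt[OF M assms(5)] by simp
  then have "i < N" by simp
  moreover have "int k < int N" using ki divlt[OF M assms(3)] by simp
  then have "k < N" by simp
  ultimately have D: "(r,i,k) \<in> DD m N" by (simp add: DD_def)
  have "u mod int m = (v + (u - v)) mod int m" by simp
  also have "\<dots> = (v mod int m + (u - v) mod int m) mod int m" by (rule mod_add_eq[symmetric])
  also have "\<dots> = (int r + 1) mod int m" using ri assms(6) by simp
  finally have um: "u mod int m = (int r + 1) mod int m" .
  have "(int r + 1) mod int m + int m * int k = u"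
    using um ki by (metis mult_div_mod_eq add.commute)
  moreover have "int r + int m * int i = v" using ri ii by (metis mult_div_mod_eq add.commute)
  ultimately have "phi m (r,i,k) = {v, u}"
    unfolding phi_def by simp
  then show ?thesis using D by (metis image_eqI insert_commute)
qed

lemma from_phi:
  fixes t K N m :: nat
  assumes K: "K \<ge> 1" and N: "N = 2*K" and m: "m = 2*t+4"
    and x: "x \<in> DD m N"
  shows "phi m x \<in> circ_edges (N*m) ({1 + int j * (2 * int t + 4) | j. j \<le> K - 1} \<union> {2 * int t + 3 + int j * (2 * int t + 4) | j. j \<le> K - 1})"
proof -
  obtain r i k where xd: "x = (r,i,k)" by (cases x) auto
  have b: "r < m" "i < N" "k < N" using x xd by (auto simp: DD_def)
  define u where "u = int r + int m * int i"
  define v where "v = (int r + 1) mod int m + int m * int k"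
  define n where "n = int N * int m"
  have mpos: "int m > 0" using m by simp
  have um: "u mod int m = int r" using b unfolding u_def by simp
  have vm: "v mod int m = (int r + 1) mod int m" unfolding v_def by simp
  have "u \<ge> 0" unfolding u_def by simp
  have "int i + 1 \<le> int N" using b by simp
  then have "int m * (int i + 1) \<le> int m * int N" using mpos by (intro mult_left_mono) auto
  then have "u < n" using b unfolding u_def n_def by (simp add: algebra_simps)
  have "v \<ge> 0" unfolding v_def using mpos by simp
  have "int k + 1 \<le> int N" using b by simp
  then have "int m * (int k + 1) \<le> int m * int N" using mpos by (intro mult_left_mono) auto
  moreover have "(int r + 1) mod int m < int m" using mpos by simp
  ultimately have "v < n" unfolding v_def n_def by (simp add: algebra_simps)
  have "u \<noteq> v"
  proof
    assume "u = v"
    then have "int r = (int r + 1) mod int m" using um vm by simp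
    show False
    proof (cases "r + 1 < m")
      case True
      then have "(int r + 1) mod int m = int r + 1" by simp
      then show False using \<open>int r = (int r + 1) mod int m\<close> by linarith
    next
      case False
      then have "int r + 1 = int m" using b by simp
      then have "(int r + 1) mod int m = 0" by simp
      then have "int r = 0" using \<open>int r = (int r + 1) mod int m\<close> by (metis (no_types))
      then show False using \<open>int r + 1 = int m\<close> m by linarith
    qed
  qed
  have vu: "(v - u) mod int m = 1"
  proof -
    have "(v - u) mod int m = (v mod int m - u mod int m) mod int m" by (simp add: mod_diff_eq)
    also have "\<dots> = ((int r + 1) mod int m - int r) mod int m" using um vm by simp
    also have "\<dots> = ((int r + 1) - int r) mod int m" by (simp add: mod_diff_left_eq)
    also have "\<dots> = 1" using m by simp
    finally show ?thesis .
  qed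
  define w where "w = (v - u) mod n"
  have npos: "n > 0" unfolding n_def using N K m by simp
  have w0: "0 \<le> w" "w < n" unfolding w_def using npos by auto
  have "int m dvd n" unfolding n_def by simp
  then have wm: "w mod int m = 1" unfolding w_def using vu by (simp add: mod_mod_cancel)
  define j where "j = w div int m"
  have wj: "w = int m * j + 1" using wm unfolding j_def by (metis mult_div_mod_eq)
  have j0: "j \<ge> 0" unfolding j_def using w0 mpos by (simp add: pos_imp_zdiv_nonneg_iff)
  have jN: "j < int N" unfolding j_def using divlt[OF mpos] w0 unfolding n_def by simp
  have uv: "(u - v) mod n = (- w) mod n" unfolding w_def by (simp add: mod_minus_eq)
  let ?S = "{1 + int j * (2 * int t + 4) | j. j \<le> K - 1} \<union> {2 * int t + 3 + int j * (2 * int t + 4) | j. j \<le> K - 1}"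
  have "\<exists>a\<in>?S. (u - v) mod n = a mod n \<or> (u - v) mod n = (- a) mod n"
  proof (cases "j \<le> int K - 1")
    case True
    have "w \<in> ?S"
    proof -
      have "w = 1 + int (nat j) * (2 * int t + 4)" using wj j0 m by simp
      moreover have "nat j \<le> K - 1" using True K by linarith
      ultimately show ?thesis by blast
    qed
    then show ?thesis using uv by blast
  next
    case False
    define a where "a = n - w"
    have "a = 2 * int t + 3 + int (nat (int N - 1 - j)) * (2 * int t + 4)"
      using wj jN m unfolding a_def n_def by (simp add: algebra_simps)
    moreover have "nat (int N - 1 - j) \<le> K - 1" using False N K by linarith
    ultimately have "a \<in> ?S" by blast
    moreover have "(u - v) mod n = a mod n" using uv unfolding a_def
      by (metis add.commute diff_conv_add_uminus mod_add_self2)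
    ultimately show ?thesis by blast
  qed
  then have ex: "\<exists>a\<in>?S. (u - v) mod int (N*m) = a mod int (N*m) \<or> (u - v) mod int (N*m) = (- a) mod int (N*m)"
    unfolding n_def of_nat_mult[symmetric] .
  have e: "phi m x = {u,v}" using xd unfolding phi_def u_def v_def by simp
  have "u \<in> circ_vertices (N*m)" "v \<in> circ_vertices (N*m)"
    unfolding circ_vertices_def using \<open>u \<ge> 0\<close> \<open>u < n\<close> \<open>v \<ge> 0\<close> \<open>v < n\<close> n_def by auto
  then show ?thesis unfolding e circ_edges_def using ex \<open>u \<noteq> v\<close> by blast
qed



lemma E_eq:
  fixes t K N m :: nat
  assumes K: "K \<ge> 1" and N: "N = 2*K" and m: "m = 2*t+4"
  shows "circ_edges (N*m) ({1 + int j * (2 * int t + 4) | j. j \<le> K - 1} \<union> {2 * int t + 3 + int j * (2 * int t + 4) | j. j \<le> K - 1})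
     = phi m ` DD m N" (is "circ_edges _ ?S = _")
proof
  show "phi m ` DD m N \<subseteq> circ_edges (N * m) ?S" using from_phi[OF K N m] by blast
next
  show "circ_edges (N * m) ?S \<subseteq> phi m ` DD m N"
  proof
    fix e assume "e \<in> circ_edges (N * m) ?S"
    then obtain u v where e: "e = {u,v}" and P: "u \<in> circ_vertices (N*m)" "v \<in> circ_vertices (N*m)"
      and "\<exists>a\<in>?S. (u - v) mod int (N*m) = a mod int (N*m) \<or> (u - v) mod int (N*m) = (- a) mod int (N*m)"
      unfolding circ_edges_def by blast
    then obtain a where a: "a \<in> ?S" and c: "(u - v) mod int (N*m) = a mod int (N*m) \<or> (u - v) mod int (N*m) = (- a) mod int (N*m)"
      by blast
    have u: "0 \<le> u" "u < int N * int m" and v: "0 \<le> v" "v < int N * int m"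
      using P by (auto simp: circ_vertices_def)
    have dv: "int m dvd int (N*m)" by simp
    have am: "a mod int m = 1 \<or> a mod int m = int m - 1" using S_mod[OF a] m by (simp add: add.commute)
    have c2: "(u - v) mod int m = a mod int m \<or> (u - v) mod int m = (- a) mod int m"
    proof -
      have mm: "\<And>z. z mod int (N*m) mod int m = z mod int m" using dv by (simp add: mod_mod_cancel)
      show ?thesis using c mm[of "u-v"] mm[of a] mm[of "-a"] by auto
    qed
    have mp: "int m \<ge> 4" using m by simp
    have "(u - v) mod int m = 1 \<or> (u - v) mod int m = int m - 1"
    proof -
      have "(- a) mod int m = 1 \<or> (- a) mod int m = int m - 1"
        using am mp by (auto simp: zmod_zminus1_eq_if)
      then show ?thesis using c2 am by auto
    qed
    then show "e \<in> phi m ` DD m N"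
    proof
      assume "(u - v) mod int m = 1"
      then show ?thesis using to_phi[of m u N v] u v m e by simp
    next
      assume h: "(u - v) mod int m = int m - 1"
      have "(v - u) mod int m = (- (u - v)) mod int m" by simp
      also have "\<dots> = 1" using h mp by (subst zmod_zminus1_eq_if) simp
      finally have "{v, u} \<in> phi m ` DD m N" using to_phi[of m v N u] u v m by simp
      then show ?thesis using e by (simp add: insert_commute)
    qed
  qed
qed



lemma pred_mod: "R < (m::nat) \<Longrightarrow> ((R + m - 1) mod m + 1) mod m = R"
  by (cases R) (auto simp: mod_Suc)

lemma pred_mod2: "r < (m::nat) \<Longrightarrow> R = (r + 1) mod m \<Longrightarrow> r = (R + m - 1) mod m"
proof -
  assume a: "r < m" "R = (r + 1) mod m"
  show ?thesis
  proof (cases "r + 1 < m")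
    case True
    then have "R = r + 1" using a by simp
    then have "R + m - 1 = r + m" by simp
    then show ?thesis using a by simp
  next
    case False
    then have "r + 1 = m" using a by simp
    then have "R = 0" using a by simp
    then show ?thesis using \<open>r + 1 = m\<close> by simp
  qed
qed

lemma int_succ_mod: "(int r + 1) mod int m = int ((r + 1) mod m)"
proof -
  have "int ((r + 1) mod m) = int (r + 1) mod int m" by (rule of_nat_mod)
  then show ?thesis by (simp add: add.commute)
qed

lemma incident:
  assumes m: "m \<ge> 3" and x: "0 \<le> x" "x < int N * int m"
  defines "R \<equiv> nat (x mod int m)" and "I \<equiv> nat (x div int m)"
  shows "{e \<in> phi m ` DD m N. x \<in> e} = phi m ` ((\<lambda>k. (R,I,k)) ` {0..<N} \<union> (\<lambda>k. ((R + m - 1) mod m,k,I)) ` {0..<N})"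
proof -
  define R' where "R' = (R + m - 1) mod m"
  have mp: "int m > 0" using m by simp
  have Ri: "int R = x mod int m" unfolding R_def using mp by simp
  have Ii: "int I = x div int m" unfolding I_def using mp x by (simp add: pos_imp_zdiv_nonneg_iff)
  have xe: "x = int R + int m * int I" using Ri Ii by (metis mult_div_mod_eq add.commute)
  have Rm: "R < m" using Ri mp by (metis of_nat_less_iff pos_mod_bound)
  have IN: "I < N" using Ii divlt[OF mp x(2)] by simp
  have R'm: "R' < m" unfolding R'_def using m by simp
  have R'R: "(R' + 1) mod m = R" unfolding R'_def using pred_mod[OF Rm] .
  show ?thesis unfolding R'_def[symmetric]
  proof
    show "{e \<in> phi m ` DD m N. x \<in> e} \<subseteq> phi m ` ((\<lambda>k. (R,I,k)) ` {0..<N} \<union> (\<lambda>k. (R',k,I)) ` {0..<N})"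
    proof
      fix e assume "e \<in> {e \<in> phi m ` DD m N. x \<in> e}"
      then obtain r i k where d: "(r,i,k) \<in> DD m N" and e: "e = phi m (r,i,k)" and xe': "x \<in> e" by auto
      have b: "r < m" "i < N" "k < N" using d by (auto simp: DD_def)
      from xe' e have "x = int r + int m * int i \<or> x = int ((r + 1) mod m) + int m * int k"
        by (auto simp: phi_def int_succ_mod)
      then show "e \<in> phi m ` ((\<lambda>k. (R,I,k)) ` {0..<N} \<union> (\<lambda>k. (R',k,I)) ` {0..<N})"
      proof
        assume h: "x = int r + int m * int i"
        have "x mod int m = int r" "x div int m = int i" using h b by simp_all
        then have "r = R" "i = I" using Ri Ii by simp_all
        then show ?thesis using e b by auto
      next
        assume h: "x = int ((r + 1) mod m) + int m * int k"
        have "(r + 1) mod m < m" using b by simp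
        then have "x mod int m = int ((r + 1) mod m)" "x div int m = int k" using h
          by (simp_all add: of_nat_less_iff[symmetric] del: of_nat_less_iff)
        then have "(r + 1) mod m = R" "k = I" using Ri Ii by simp_all
        then have "r = R'" unfolding R'_def using pred_mod2 b by metis
        then show ?thesis using e b \<open>k = I\<close> by auto
      qed
    qed
  next
    show "phi m ` ((\<lambda>k. (R,I,k)) ` {0..<N} \<union> (\<lambda>k. (R',k,I)) ` {0..<N}) \<subseteq> {e \<in> phi m ` DD m N. x \<in> e}"
    proof
      fix e assume "e \<in> phi m ` ((\<lambda>k. (R,I,k)) ` {0..<N} \<union> (\<lambda>k. (R',k,I)) ` {0..<N})"
      then obtain k where k: "k < N" and dj: "e = phi m (R,I,k) \<or> e = phi m (R',k,I)" by auto
      from dj show "e \<in> {e \<in> phi m ` DD m N. x \<in> e}"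
      proof
        assume e: "e = phi m (R,I,k)"
        have "(R,I,k) \<in> DD m N" using Rm IN k by (simp add: DD_def)
        moreover have "x \<in> e" using e xe by (simp add: phi_def)
        ultimately show ?thesis using e by auto
      next
        assume e: "e = phi m (R',k,I)"
        have "(R',k,I) \<in> DD m N" using R'm IN k by (simp add: DD_def)
        moreover have "x \<in> e" using e xe R'R by (simp add: phi_def int_succ_mod)
        ultimately show ?thesis using e by auto
      qed
    qed
  qed
qed

lemma vsum_formula:
  assumes m: "m \<ge> 3" and x: "0 \<le> x" "x < int N * int m"
  defines "R \<equiv> nat (x mod int m)" and "I \<equiv> nat (x div int m)"
  shows "vsum (phi m ` DD m N) g x = (\<Sum>k<N. g (phi m (R,I,k))) + (\<Sum>k<N. g (phi m ((R + m - 1) mod m,k,I)))"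
proof -
  define R' where "R' = (R + m - 1) mod m"
  have mp: "int m > 0" using m by simp
  have Ri: "int R = x mod int m" unfolding R_def using mp by simp
  have Ii: "int I = x div int m" unfolding I_def using mp x by (simp add: pos_imp_zdiv_nonneg_iff)
  have Rm: "R < m" using Ri mp by (metis of_nat_less_iff pos_mod_bound)
  have IN: "I < N" using Ii divlt[OF mp x(2)] by simp
  have R'm: "R' < m" unfolding R'_def using m by simp
  have R'R: "(R' + 1) mod m = R" unfolding R'_def using pred_mod[OF Rm] .
  have neq: "R' \<noteq> R"
  proof
    assume "R' = R"
    then have "(R + 1) mod m = R" using R'R by simp
    show False
    proof (cases "R + 1 < m")
      case True
      then show False using \<open>(R + 1) mod m = R\<close> by simp
    next
      case False
      then have "R + 1 = m" using Rm by simp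
      then have "R = 0" using \<open>(R + 1) mod m = R\<close> by simp
      then show False using \<open>R + 1 = m\<close> m by simp
    qed
  qed
  let ?A = "(\<lambda>k. (R,I,k)) ` {0..<N}" and ?B = "(\<lambda>k. (R',k,I)) ` {0..<N}"
  have sub: "?A \<union> ?B \<subseteq> DD m N" using Rm R'm IN by (auto simp: DD_def)
  have inj: "inj_on (phi m) (?A \<union> ?B)" using phi_inj[OF m] sub by (rule inj_on_subset)
  have "vsum (phi m ` DD m N) g x = sum g (phi m ` (?A \<union> ?B))"
    unfolding vsum_def using incident[OF m x] unfolding R_def I_def R'_def by simp
  also have "\<dots> = sum (g \<circ> phi m) (?A \<union> ?B)" using inj by (rule sum.reindex)
  also have "\<dots> = sum (g \<circ> phi m) ?A + sum (g \<circ> phi m) ?B"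
    by (rule sum.union_disjoint) (use neq in auto)
  also have "sum (g \<circ> phi m) ?A = (\<Sum>k<N. g (phi m (R,I,k)))"
    by (subst sum.reindex) (auto simp: inj_on_def lessThan_atLeast0)
  also have "sum (g \<circ> phi m) ?B = (\<Sum>k<N. g (phi m (R',k,I)))"
    by (subst sum.reindex) (auto simp: inj_on_def lessThan_atLeast0)
  finally show ?thesis unfolding R'_def .
qed



lemma pred_parity: assumes "even (m::nat)" "R < m" "m \<ge> 2" shows "even ((R + m - 1) mod m) \<longleftrightarrow> odd R"
proof (cases R)
  case 0
  then show ?thesis using assms by simp
next
  case (Suc R0)
  then have "(R + m - 1) mod m = R0" using assms by simp
  then show ?thesis using Suc by simp
qed

lemma val_cases: assumes "even m" "R < m" "m \<ge> 4"
  shows "beta m R + beta m ((R + m - 1) mod m) = (if R = 0 then m div 2 else if odd R then m - 1 else m)"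
proof (cases R)
  case 0
  then have "(R + m - 1) mod m = m - 1" using assms by simp
  moreover have "odd (m - 1)" using assms by simp
  moreover have "(m - 1) div 2 = m div 2 - 1" using assms by (auto elim!: evenE)
  ultimately show ?thesis using 0 assms unfolding beta_def by (auto elim!: evenE)
next
  case (Suc R0)
  then have p: "(R + m - 1) mod m = R0" using assms by simp
  show ?thesis
  proof (cases "odd R")
    case True
    then have "even R0" "R0 div 2 = R div 2" using Suc by auto
    then show ?thesis using p True Suc assms unfolding beta_def by auto
  next
    case False
    then have "odd R0" "R0 div 2 = R div 2 - 1" "R div 2 \<ge> 1" using Suc by (auto elim!: evenE)
    moreover have "R div 2 < m" using assms by simp
    ultimately show ?thesis using p False Suc assms unfolding beta_def by auto
  qed
qed

lemma lab_pair:
  assumes "even m" "m \<ge> 2" "R < m" "I < N" "k < N"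
  defines "R' \<equiv> (R + m - 1) mod m"
  shows "lab m N (R,I,k) + lab m N (R',k,I) = (beta m R + beta m R') * N^2 + N^2 + 1"
proof -
  have par: "even R' \<longleftrightarrow> odd R" unfolding R'_def using pred_parity assms by blast
  have b1: "N*k + I < N^2" "N*I + k < N^2" using sq_bound assms by auto
  show ?thesis
  proof (cases "even R")
    case True
    then show ?thesis using par b1 unfolding lab_def by (simp add: algebra_simps)
  next
    case False
    then show ?thesis using par b1 unfolding lab_def by (simp add: algebra_simps)
  qed
qed

definition flab :: "nat \<Rightarrow> nat \<Rightarrow> int set \<Rightarrow> nat" where
  "flab m N e = lab m N (the_inv_into (DD m N) (phi m) e)"

lemma flab_phi: "m \<ge> 3 \<Longrightarrow> d \<in> DD m N \<Longrightarrow> flab m N (phi m d) = lab m N d"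
  unfolding flab_def using phi_inj by (simp add: the_inv_into_f_f)

lemma flab_bij: "m \<ge> 3 \<Longrightarrow> even m \<Longrightarrow> bij_betw (flab m N) (phi m ` DD m N) {1..m*N^2}"
proof -
  assume m: "m \<ge> 3" "even m"
  have "bij_betw (the_inv_into (DD m N) (phi m)) (phi m ` DD m N) (DD m N)"
    using phi_inj[OF m(1)] by (simp add: bij_betw_the_inv_into inj_on_imp_bij_betw)
  then have "bij_betw (lab m N \<circ> the_inv_into (DD m N) (phi m)) (phi m ` DD m N) {1..m*N^2}"
    using lab_bij[OF m(2)] by (rule bij_betw_trans)
  then show ?thesis unfolding flab_def comp_def by (simp add: fun_eq_iff) 
qed

lemma vsum_flab:
  assumes m: "m \<ge> 4" "even m" and x: "0 \<le> x" "x < int N * int m"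
  defines "R \<equiv> nat (x mod int m)"
  shows "vsum (phi m ` DD m N) (flab m N) x = N * ((if R = 0 then m div 2 else if odd R then m - 1 else m) * N^2 + N^2 + 1)"
proof -
  define I where "I = nat (x div int m)"
  define R' where "R' = (R + m - 1) mod m"
  have mp: "int m > 0" using m by simp
  have Ri: "int R = x mod int m" unfolding R_def using mp by simp
  have Ii: "int I = x div int m" unfolding I_def using mp x by (simp add: pos_imp_zdiv_nonneg_iff)
  have Rm: "R < m" using Ri mp by (metis of_nat_less_iff pos_mod_bound)
  have IN: "I < N" using Ii divlt[OF mp x(2)] by simp
  have R'm: "R' < m" unfolding R'_def using m by simp
  have m3: "m \<ge> 3" using m by simp
  have "vsum (phi m ` DD m N) (flab m N) x = (\<Sum>k<N. flab m N (phi m (R,I,k))) + (\<Sum>k<N. flab m N (phi m (R',k,I)))"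
    using vsum_formula[OF m3 x, of "flab m N"] unfolding R_def I_def R'_def by simp
  also have "\<dots> = (\<Sum>k<N. lab m N (R,I,k)) + (\<Sum>k<N. lab m N (R',k,I))"
    using Rm R'm IN by (simp add: flab_phi[OF m3] DD_def)
  also have "\<dots> = (\<Sum>k<N. lab m N (R,I,k) + lab m N (R',k,I))" by (simp add: sum.distrib)
  also have "\<dots> = (\<Sum>k<N. (beta m R + beta m R') * N^2 + N^2 + 1)"
    using lab_pair[of m R I N] m Rm IN unfolding R'_def by (intro sum.cong) auto
  also have "\<dots> = N * ((beta m R + beta m R') * N^2 + N^2 + 1)" by simp
  also have "beta m R + beta m R' = (if R = 0 then m div 2 else if odd R then m - 1 else m)"
    unfolding R'_def using val_cases m Rm by blast
  finally show ?thesis .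
qed



lemma side_sum:
  assumes finV: "finite V" and finE: "finite E"
    and Esub: "\<forall>e\<in>E. \<exists>u v. e = {u,v} \<and> u \<in> V \<and> v \<in> V \<and> u \<noteq> v"
    and sep: "\<forall>u\<in>V. \<forall>v\<in>V. {u,v} \<in> E \<longrightarrow> u \<noteq> v \<longrightarrow> h u \<noteq> h v"
    and two: "h ` V \<subseteq> {a, b}" and c: "c \<in> {a, b}"
  shows "(\<Sum>x\<in>{x\<in>V. h x = c}. vsum E g x) = (\<Sum>e\<in>E. g e)"
proof -
  let ?X = "{x\<in>V. h x = c}"
  have one: "card {x\<in>?X. x \<in> e} = 1" if e: "e \<in> E" for e
  proof -
    obtain u v where ee: "e = {u,v}" "u \<in> V" "v \<in> V" "u \<noteq> v" using Esub e by blast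
    have d: "h u \<noteq> h v" using sep ee e by blast
    have "h u \<in> {a,b}" "h v \<in> {a,b}" using two ee by auto
    then have "(h u = c \<and> h v \<noteq> c) \<or> (h v = c \<and> h u \<noteq> c)" using d c by auto
    then have "{x\<in>?X. x \<in> e} = {u} \<or> {x\<in>?X. x \<in> e} = {v}" using ee by auto
    then show ?thesis by auto
  qed
  have "(\<Sum>x\<in>?X. vsum E g x) = (\<Sum>x\<in>?X. \<Sum>e\<in>{e\<in>E. x \<in> e}. g e)" by (simp add: vsum_def)
  also have "\<dots> = (\<Sum>e\<in>E. \<Sum>x\<in>{x\<in>?X. x \<in> e}. g e)"
    by (rule sum.swap_restrict) (use finV finE in auto)
  also have "\<dots> = (\<Sum>e\<in>E. g e)"
  proof (rule sum.cong)
    fix e assume "e \<in> E"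
    then show "(\<Sum>x\<in>{x\<in>?X. x \<in> e}. g e) = g e" using one[of e] by simp
  qed simp
  finally show ?thesis .
qed

lemma lower3:
  assumes finV: "finite V" and finE: "finite E"
    and Esub: "\<forall>e\<in>E. \<exists>u v. e = {u,v} \<and> u \<in> V \<and> v \<in> V \<and> u \<noteq> v"
    and deg: "\<forall>x\<in>V. vsum E (\<lambda>_. 1) x = d" and dpos: "d > 0"
    and ne: "E \<noteq> {}"
    and la: "local_antimagic V E f"
  shows "card (vsum E f ` V) \<ge> 3"
proof (rule ccontr)
  assume "\<not> 3 \<le> card (vsum E f ` V)"
  then have c2: "card (vsum E f ` V) \<le> 2" by simp
  let ?h = "vsum E f"
  have sep: "\<forall>u\<in>V. \<forall>v\<in>V. {u,v} \<in> E \<longrightarrow> u \<noteq> v \<longrightarrow> ?h u \<noteq> ?h v"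
    using la unfolding local_antimagic_def by blast
  obtain e0 where "e0 \<in> E" using ne by blast
  then obtain u0 v0 where uv: "e0 = {u0,v0}" "u0 \<in> V" "v0 \<in> V" "u0 \<noteq> v0" using Esub by blast
  have huv: "?h u0 \<noteq> ?h v0" using sep uv \<open>e0 \<in> E\<close> by blast
  have "{?h u0, ?h v0} \<subseteq> ?h ` V" using uv by auto
  then have "card {?h u0, ?h v0} \<le> card (?h ` V)" using finV by (intro card_mono) auto
  then have "card (?h ` V) = 2" using c2 huv by simp
  then obtain a b where ab: "?h ` V = {a, b}" "a \<noteq> b" by (auto simp: card_2_iff)
  have two: "?h ` V \<subseteq> {a,b}" using ab by simp
  define X where "X = {x\<in>V. ?h x = a}"
  define Y where "Y = {x\<in>V. ?h x = b}"
  have sX: "(\<Sum>x\<in>X. ?h x) = (\<Sum>e\<in>E. f e)"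
    unfolding X_def by (rule side_sum[OF finV finE Esub sep two]) simp
  have sY: "(\<Sum>x\<in>Y. ?h x) = (\<Sum>e\<in>E. f e)"
    unfolding Y_def by (rule side_sum[OF finV finE Esub sep two]) simp
  have dX: "(\<Sum>x\<in>X. vsum E (\<lambda>_. 1) x) = (\<Sum>e\<in>E. (1::nat))"
    unfolding X_def by (rule side_sum[OF finV finE Esub sep two]) simp
  have dY: "(\<Sum>x\<in>Y. vsum E (\<lambda>_. 1) x) = (\<Sum>e\<in>E. (1::nat))"
    unfolding Y_def by (rule side_sum[OF finV finE Esub sep two]) simp
  have "(\<Sum>x\<in>X. ?h x) = card X * a" unfolding X_def by simp
  moreover have "(\<Sum>x\<in>Y. ?h x) = card Y * b" unfolding Y_def by simp
  moreover have "(\<Sum>x\<in>X. vsum E (\<lambda>_. 1) x) = card X * d" using deg unfolding X_def by simp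
  moreover have "(\<Sum>x\<in>Y. vsum E (\<lambda>_. 1) x) = card Y * d" using deg unfolding Y_def by simp
  ultimately have e1: "card X * a = card Y * b" and e2: "card X * d = card Y * d"
    using sX sY dX dY by auto
  have "card X = card Y" using e2 dpos by simp
  moreover have "card X > 0"
  proof -
    have "a \<in> ?h ` V" using ab by simp
    then have "X \<noteq> {}" unfolding X_def by auto
    moreover have "finite X" unfolding X_def using finV by simp
    ultimately show ?thesis by (simp add: card_gt_0_iff)
  qed
  ultimately have "a = b" using e1 by simp
  then show False using ab by simp
qed



definition sig :: "nat \<Rightarrow> nat \<Rightarrow> nat" where
  "sig m R = (if R = 0 then m div 2 else if odd R then m - 1 else m)"

lemma sig_neq: assumes "even (m::nat)" "m \<ge> 4" "odd R1 \<noteq> odd R2" shows "sig m R1 \<noteq> sig m R2"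
proof -
  have "m div 2 < m - 1" using assms by (auto elim!: evenE)
  then show ?thesis using assms unfolding sig_def by (auto simp: odd_pos)
qed

lemma succ_parity: assumes "even (m::nat)" "r < m" shows "odd ((r + 1) mod m) \<noteq> odd r"
proof (cases "r + 1 < m")
  case True
  then have "(r + 1) mod m = r + 1" by (rule mod_less)
  then show ?thesis by simp
next
  case False
  then have "r + 1 = m" using assms by simp
  then show ?thesis using assms by auto
qed

lemma adj_layers:
  assumes "m \<ge> 3" "{x, y} = phi m (r,i,k)" "r < m"
  shows "(nat (x mod int m) = r \<and> nat (y mod int m) = (r + 1) mod m) \<or>
         (nat (y mod int m) = r \<and> nat (x mod int m) = (r + 1) mod m)"
proof -
  let ?a = "int r + int m * int i" and ?b = "int ((r + 1) mod m) + int m * int k"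
  have "{x,y} = {?a, ?b}" using assms(2) by (simp add: phi_def int_succ_mod)
  then have "(x = ?a \<and> y = ?b) \<or> (x = ?b \<and> y = ?a)" by (auto simp: doubleton_eq_iff)
  moreover have "?a mod int m = int r" using assms by simp
  moreover have "?b mod int m = int ((r + 1) mod m)"
  proof -
    have "(r + 1) mod m < m" using assms by simp
    then have "int ((r + 1) mod m) mod int m = int ((r + 1) mod m)"
      by (simp add: of_nat_less_iff[symmetric] del: of_nat_less_iff)
    then show ?thesis by simp
  qed
  ultimately show ?thesis by auto
qed

theorem mainTheorem12:
  fixes s t :: nat
  assumes "s \<ge> 2"
  defines "n \<equiv> 2 ^ s * (t + 2)"
    and "S \<equiv> {1 + int j * (2 * int t + 4) | j. j \<le> 2 ^ (s - 2) - 1}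
            \<union> {2 * int t + 3 + int j * (2 * int t + 4) | j. j \<le> 2 ^ (s - 2) - 1}"
  shows "chi_la (circ_vertices n) (circ_edges n S) = 3"
proof -
  define K :: nat where "K = 2^(s-2)"
  define N :: nat where "N = 2*K"
  define m :: nat where "m = 2*t+4"
  have K1: "K \<ge> 1" by (simp add: K_def)
  have N2: "N \<ge> 2" using K1 N_def by simp
  have m4: "m \<ge> 4" and m3: "m \<ge> 3" and me: "even m" by (simp_all add: m_def)
  obtain s' where s': "s = s' + 2" using assms(1) by (metis le_add_diff_inverse2)
  have "(2::nat)^s = 2^(s-2) * 4" unfolding s' by (simp add: power_add)
  then have nN: "n = N * m" unfolding n_def N_def m_def K_def by (simp add: algebra_simps)
  have SE: "circ_edges n S = phi m ` DD m N"
    unfolding nN S_def K_def[symmetric] using E_eq[OF K1 N_def m_def] by simp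
  have V: "circ_vertices n = {0..<int N * int m}" by (simp add: circ_vertices_def nN)
  let ?V = "{0..<int N * int m}" and ?E = "phi m ` DD m N"
  show ?thesis
    unfolding SE V chi_la_def
  proof (rule Least_equality)
    show "\<exists>f. local_antimagic ?V ?E f \<and> card (vsum ?E f ` ?V) = 3"
    proof (intro exI conjI)
      let ?f = "flab m N"
      let ?F = "\<lambda>\<sigma>. N * (\<sigma> * N^2 + N^2 + 1)"
      have bij: "bij_betw ?f ?E {1..m*N^2}" by (rule flab_bij[OF m3 me])
      have cE: "card ?E = m*N^2" using bij_betw_same_card[OF bij] by simp
      have val: "vsum ?E ?f x = ?F (sig m (nat (x mod int m)))" if "x \<in> ?V" for x
        using vsum_flab[OF m4 me, of x N] that unfolding sig_def by auto
      have Finj: "a = b" if "?F a = ?F b" for a b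
      proof -
        have "N > 0" using N2 by simp
        then have "a * N^2 + N^2 + 1 = b * N^2 + N^2 + 1" using that by simp
        then have "a * N^2 = b * N^2" by simp
        moreover have "N^2 > 0" using N2 by simp
        ultimately show ?thesis by simp
      qed
      show "local_antimagic ?V ?E ?f"
        unfolding local_antimagic_def
      proof (intro conjI ballI impI)
        show "bij_betw ?f ?E {1..card ?E}" using bij cE by simp
      next
        fix x y assume x: "x \<in> ?V" and y: "y \<in> ?V" and e: "{x,y} \<in> ?E" and "x \<noteq> y"
        obtain r i k where d: "(r,i,k) \<in> DD m N" and ph: "{x,y} = phi m (r,i,k)" using e by auto
        have rm: "r < m" using d by (simp add: DD_def)
        have "odd (nat (x mod int m)) \<noteq> odd (nat (y mod int m))"
          using adj_layers[OF m3 ph rm] succ_parity[OF me rm] by auto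
        then have "sig m (nat (x mod int m)) \<noteq> sig m (nat (y mod int m))" by (rule sig_neq[OF me m4])
        then show "vsum ?E ?f x \<noteq> vsum ?E ?f y" using val[OF x] val[OF y] Finj by metis
      qed
      show "card (vsum ?E ?f ` ?V) = 3"
      proof -
        have img: "vsum ?E ?f ` ?V = {?F (m div 2), ?F (m - 1), ?F m}"
        proof
          show "vsum ?E ?f ` ?V \<subseteq> {?F (m div 2), ?F (m - 1), ?F m}"
            using val unfolding sig_def by auto
        next
          have NM: "int N * int m \<ge> 8" using N2 m4
            by (metis of_nat_mult of_nat_numeral of_nat_le_iff mult_le_mono numeral_times_numeral semiring_norm(12) semiring_norm(13) semiring_norm(11) semiring_norm(2) semiring_norm(6)) 
          have "(0::int) \<in> ?V" "(1::int) \<in> ?V" "(2::int) \<in> ?V" using NM by auto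
          moreover have "nat (0 mod int m) = 0" "nat (1 mod int m) = 1" "nat (2 mod int m) = 2" using m4 by auto
          moreover have "sig m 0 = m div 2" "sig m 1 = m - 1" "sig m 2 = m" by (simp_all add: sig_def)
          ultimately show "{?F (m div 2), ?F (m - 1), ?F m} \<subseteq> vsum ?E ?f ` ?V"
            using val by (metis (no_types, lifting) empty_subsetI image_eqI insert_subset)
        qed
        have lt: "m div 2 < m - 1" "m - 1 < m" using m4 me by (auto elim!: evenE)
        then have "?F (m div 2) \<noteq> ?F (m - 1)" "?F (m div 2) \<noteq> ?F m" "?F (m - 1) \<noteq> ?F m"
          using Finj by (metis less_irrefl less_trans)+
        then show ?thesis unfolding img by simp
      qed
    qed
  next
    fix k assume "\<exists>f. local_antimagic ?V ?E f \<and> card (vsum ?E f ` ?V) = k"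
    then obtain f where la: "local_antimagic ?V ?E f" and ck: "card (vsum ?E f ` ?V) = k" by blast
    have Esub: "\<forall>e\<in>?E. \<exists>u v. e = {u,v} \<and> u \<in> ?V \<and> v \<in> ?V \<and> u \<noteq> v"
      unfolding SE[symmetric] nN circ_edges_def circ_vertices_def by auto
    have deg: "\<forall>x\<in>?V. vsum ?E (\<lambda>_. 1) x = 2*N"
      using vsum_formula[OF m3] by simp
    have ne: "?E \<noteq> {}" using N2 m4 by (auto simp: DD_def)
    have "card (vsum ?E f ` ?V) \<ge> 3"
      by (rule lower3[OF _ _ Esub deg _ ne la]) (use N2 in \<open>auto simp: DD_def\<close>)
    then show "3 \<le> k" using ck by simp
  qed
qed

end
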